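(* Let $k$ be a field of characteristic different from $2$, and let $(S,E)$ and $(S',E')$ be finite simple graphs. If the Lie algebras $\mathfrak{n}(S,E)$ and $\mathfrak{n}(S',E')$ over $k$ are isomorphic as Lie algebras, then the graphs $(S,E)$ and $(S',E')$ are isomorphic.
   Context: A finite simple graph $(S,E)$ has finite vertex set $S$ and edge set $E$ consisting of unordered pairs $\alpha\beta$ of distinct vertices (no loops, no multiple edges). Given such a graph and a field $k$ with $\mathrm{char}(k)\neq 2$, let $V$ be the $k$-vector space with basis $S$, and let $W\subseteq \bigwedge^2 V$ be the subspace spanned by all $\alpha\wedge\beta$ with $\alpha,\beta\in S$, $\alpha\neq\beta$ and $\alpha\beta\notin E$. The Lie algebra $\mathfrak{n}(S,E)$ is the vector space $V\oplus (\bigwedge^2V)/W$ with bracket determined by $[v_1,v_2]=v_1\wedge v_2 \bmod W$ for $v_1,v_2\in V$ and $[x,y]=0$ for $x\in\mathfrak{n}(S,E)$, $y\in(\bigwedge^2V)/W$ (extended bilinearly and skew-symmetrically). It has dimension $|S|+|E|$. *)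

theory Defs
  imports Main
begin

definition simple_graph :: "'a set \<Rightarrow> 'a set set \<Rightarrow> bool" where
  "simple_graph S E \<longleftrightarrow> finite S \<and>
     (\<forall>e\<in>E. \<exists>x y. x \<in> S \<and> y \<in> S \<and> x \<noteq> y \<and> e = {x, y})"

definition graph_iso :: "'a set \<Rightarrow> 'a set set \<Rightarrow> 'b set \<Rightarrow> 'b set set \<Rightarrow> bool" where
  "graph_iso S E S' E' \<longleftrightarrow> (\<exists>g. bij_betw g S S' \<and>
     (\<forall>x\<in>S. \<forall>y\<in>S. {x, y} \<in> E \<longleftrightarrow> {g x, g y} \<in> E'))"

text \<open>Concrete model of n(S,E) = V (+) (wedge^2 V)/W.  An element is a pair (u, w):
  u : coefficients of v in V (supported on S);
  w : skew-symmetric coefficient function on ordered pairs, supported on edges,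
      representing sum over edges {x,y} of w(x,y) x/\y mod W (w(x,y) = - w(y,x)).\<close>
type_synonym ('a, 'k) nla = "('a \<Rightarrow> 'k) \<times> ('a \<times> 'a \<Rightarrow> 'k)"

definition nla_carrier :: "'a set \<Rightarrow> 'a set set \<Rightarrow> ('a, 'k::field) nla set" where
  "nla_carrier S E = {(u, w). (\<forall>x. x \<notin> S \<longrightarrow> u x = 0) \<and>
      (\<forall>x y. w (x, y) = - w (y, x)) \<and> (\<forall>x y. {x, y} \<notin> E \<longrightarrow> w (x, y) = 0)}"

definition nla_add :: "('a, 'k::field) nla \<Rightarrow> ('a, 'k) nla \<Rightarrow> ('a, 'k) nla" where
  "nla_add p q = (\<lambda>x. fst p x + fst q x, \<lambda>z. snd p z + snd q z)"

definition nla_smul :: "'k::field \<Rightarrow> ('a, 'k) nla \<Rightarrow> ('a, 'k) nla" where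
  "nla_smul c p = (\<lambda>x. c * fst p x, \<lambda>z. c * snd p z)"

text \<open>[v1 + c1, v2 + c2] = v1 /\ v2 mod W; coefficient of x/\y is u1 x u2 y - u1 y u2 x.\<close>
definition nla_bracket :: "'a set set \<Rightarrow> ('a, 'k::field) nla \<Rightarrow> ('a, 'k) nla \<Rightarrow> ('a, 'k) nla" where
  "nla_bracket E p q = (\<lambda>_. 0,
     \<lambda>(x, y). if {x, y} \<in> E then fst p x * fst q y - fst p y * fst q x else 0)"

definition nla_iso :: "'a set \<Rightarrow> 'a set set \<Rightarrow> 'b set \<Rightarrow> 'b set set
    \<Rightarrow> (('a, 'k::field) nla \<Rightarrow> ('b, 'k) nla) \<Rightarrow> bool" where
  "nla_iso S E S' E' f \<longleftrightarrow> bij_betw f (nla_carrier S E) (nla_carrier S' E') \<and>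
     (\<forall>p\<in>nla_carrier S E. \<forall>q\<in>nla_carrier S E. f (nla_add p q) = nla_add (f p) (f q)) \<and>
     (\<forall>c. \<forall>p\<in>nla_carrier S E. f (nla_smul c p) = nla_smul c (f p)) \<and>
     (\<forall>p\<in>nla_carrier S E. \<forall>q\<in>nla_carrier S E.
        f (nla_bracket E p q) = nla_bracket E' (f p) (f q))"

end

theory Submission
  imports Defs "HOL-Library.Function_Algebras" "HOL.Vector_Spaces"
begin

definition sc :: "'k::field \<Rightarrow> ('x \<Rightarrow> 'k) \<Rightarrow> ('x \<Rightarrow> 'k)" where
  "sc c f = (\<lambda>x. c * f x)"

lemma sc_apply[simp]: "sc c f x = c * f x" by (simp add: sc_def)

interpretation fv: vector_space "sc :: 'k::field \<Rightarrow> ('x \<Rightarrow> 'k) \<Rightarrow> ('x \<Rightarrow> 'k)"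
  by unfold_locales (auto simp: sc_def fun_eq_iff algebra_simps)

definition ev :: "'x \<Rightarrow> 'x \<Rightarrow> 'k::field" where
  "ev x = (\<lambda>y. if y = x then 1 else 0)"

lemma ev_apply: "ev x y = (if y = x then 1 else 0)" by (simp add: ev_def)

definition Vs :: "'x set \<Rightarrow> ('x \<Rightarrow> 'k::field) set" where
  "Vs S = {u. \<forall>x. x \<notin> S \<longrightarrow> u x = 0}"

definition Bf :: "'x set set \<Rightarrow> ('x \<Rightarrow> 'k::field) \<Rightarrow> ('x \<Rightarrow> 'k) \<Rightarrow> ('x \<times> 'x \<Rightarrow> 'k)" where
  "Bf E u v = (\<lambda>(x,y). if {x,y} \<in> E then u x * v y - u y * v x else 0)"

lemma sum_apply_fun: "(\<Sum>i\<in>A. F i) z = (\<Sum>i\<in>A. F i z)"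
  by (induction A rule: infinite_finite_induct) auto

lemma sum_ev_apply:
  assumes "finite A"
  shows "(\<Sum>y\<in>A. sc (c y) (ev y)) z = (if z \<in> A then c z else (0::'k::field))"
  using assms by (simp add: sum_apply_fun ev_apply if_distrib sum.delta cong: if_cong)

lemma Vs_sum:
  assumes "finite S" "u \<in> Vs S"
  shows "u = (\<Sum>y\<in>S. sc (u y) (ev y))"
  using assms by (auto simp: fun_eq_iff sum_ev_apply Vs_def)

lemma Vs_span:
  assumes "finite S" "u \<in> Vs S"
  shows "u \<in> fv.span (ev ` S)"
  apply (subst Vs_sum[OF assms])
  by (intro fv.span_sum fv.span_scale fv.span_base) auto

definition lin :: "(('x \<Rightarrow> 'k::field) \<Rightarrow> ('y \<Rightarrow> 'k)) \<Rightarrow> bool" where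
  "lin T \<longleftrightarrow> (\<forall>x y. T (x + y) = T x + T y) \<and> (\<forall>c x. T (sc c x) = sc c (T x))"

lemma lin_add: "lin T \<Longrightarrow> T (x + y) = T x + T y" by (simp add: lin_def)
lemma lin_sc: "lin T \<Longrightarrow> T (sc c x) = sc c (T x)" by (simp add: lin_def)

lemma lam_zero_eq[simp]: "(\<lambda>a. 0) = 0" by (simp add: zero_fun_def)

lemma sc_zero_left[simp]: "sc 0 x = 0" by (simp add: fun_eq_iff)
lemma sc_zero_right[simp]: "sc c 0 = 0" by (simp add: fun_eq_iff)

lemma lin_zero: "lin T \<Longrightarrow> T 0 = 0"
  using lin_sc[of T 0 0] by simp

lemma lin_diff:
  assumes "lin T" shows "T (x - y) = T x - T y"
proof -
  have "T (x - y) = T (x + sc (-1) y)" by (simp add: fun_eq_iff)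
  also have "\<dots> = T x + sc (-1) (T y)" using assms by (simp only: lin_add lin_sc)
  also have "\<dots> = T x - T y" by (simp add: fun_eq_iff)
  finally show ?thesis .
qed

lemma lin_sum: "lin T \<Longrightarrow> T (\<Sum>i\<in>A. F i) = (\<Sum>i\<in>A. T (F i))"
  by (induction A rule: infinite_finite_induct) (auto simp: lin_zero lin_add)

lemma lin_comp: "lin T \<Longrightarrow> lin U \<Longrightarrow> lin (T \<circ> U)"
  by (simp add: lin_def)

definition good :: "'a set \<Rightarrow> 'a set set \<Rightarrow> 'b set \<Rightarrow> 'b set set
    \<Rightarrow> (('a \<Rightarrow> 'k::field) \<Rightarrow> ('b \<Rightarrow> 'k)) \<Rightarrow> (('b \<Rightarrow> 'k) \<Rightarrow> ('a \<Rightarrow> 'k)) \<Rightarrow> bool" where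
  "good S E S' E' T U \<longleftrightarrow> lin T \<and> lin U \<and>
     (\<forall>u. T u \<in> Vs S') \<and> (\<forall>u. U u \<in> Vs S) \<and>
     (\<forall>u\<in>Vs S. U (T u) = u) \<and> (\<forall>u\<in>Vs S'. T (U u) = u) \<and>
     (\<forall>u\<in>Vs S. \<forall>u'\<in>Vs S. Bf E u u' = 0 \<longleftrightarrow> Bf E' (T u) (T u') = 0)"

lemma good_sym:
  fixes T :: "('a \<Rightarrow> 'k::field) \<Rightarrow> ('b \<Rightarrow> 'k)"
  assumes "good S E S' E' T U" shows "good S' E' S E U T"
proof -
  have "\<forall>u\<in>Vs S'. \<forall>u'\<in>Vs S'. Bf E' u u' = 0 \<longleftrightarrow> Bf E (U u) (U u') = 0"
  proof (intro ballI)
    fix u u' :: "'b \<Rightarrow> 'k" assume "u \<in> Vs S'" "u' \<in> Vs S'"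
    with assms show "Bf E' u u' = 0 \<longleftrightarrow> Bf E (U u) (U u') = 0"
      unfolding good_def by metis
  qed
  with assms show ?thesis unfolding good_def by auto
qed

lemma Vs_add: "u \<in> Vs S \<Longrightarrow> v \<in> Vs S \<Longrightarrow> u + v \<in> Vs S" by (simp add: Vs_def)
lemma Vs_sc: "u \<in> Vs S \<Longrightarrow> sc c u \<in> Vs S" by (simp add: Vs_def)
lemma Vs_diff: "u \<in> Vs S \<Longrightarrow> v \<in> Vs S \<Longrightarrow> u - v \<in> Vs S" by (simp add: Vs_def)
lemma Vs_ev: "x \<in> S \<Longrightarrow> ev x \<in> Vs S" by (auto simp: Vs_def ev_def)
lemma Vs_zero: "0 \<in> Vs S" by (simp add: Vs_def)
lemma Vs_sum_closed: "(\<And>i. i \<in> A \<Longrightarrow> F i \<in> Vs S) \<Longrightarrow> (\<Sum>i\<in>A. F i) \<in> Vs S"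
  by (induction A rule: infinite_finite_induct) (auto simp: Vs_zero Vs_add)

lemma goodD:
  assumes "good S E S' E' T U"
  shows "lin T" "lin U" "T u \<in> Vs S'" "U u' \<in> Vs S"
    "u \<in> Vs S \<Longrightarrow> U (T u) = u" "u' \<in> Vs S' \<Longrightarrow> T (U u') = u'"
    "u \<in> Vs S \<Longrightarrow> u2 \<in> Vs S \<Longrightarrow> Bf E u u2 = 0 \<longleftrightarrow> Bf E' (T u) (T u2) = 0"
  using assms unfolding good_def by auto

lemma ev_inj: "ev x = (ev y :: 'x \<Rightarrow> 'k::field) \<Longrightarrow> x = y"
  by (metis ev_apply one_neq_zero)

lemma good_T_ev_nonzero:
  fixes T :: "('a \<Rightarrow> 'k::field) \<Rightarrow> ('b \<Rightarrow> 'k)"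
  assumes "good S E S' E' T U" "x \<in> S" shows "T (ev x) \<noteq> 0"
proof
  assume "T (ev x) = 0"
  then have "U (T (ev x)) = 0" using goodD(2)[OF assms(1)] lin_zero[of U] by simp
  then have "ev x = (0 :: 'a \<Rightarrow> 'k)" using goodD(5)[OF assms(1) Vs_ev[OF assms(2)]] by simp
  then have "ev x x = (0 x :: 'k)" by simp
  then show False by (simp add: ev_apply)
qed

lemma indep_image:
  fixes T :: "('a \<Rightarrow> 'k::field) \<Rightarrow> ('b \<Rightarrow> 'k)"
  assumes g: "good S E S' E' T U" and fin: "finite S" and A: "A \<subseteq> S"
  shows "fv.independent ((\<lambda>x. T (ev x)) ` A) \<and> inj_on (\<lambda>x. T (ev x)) A"
proof
  have finA: "finite A" using fin A finite_subset by blast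
  show inj: "inj_on (\<lambda>x. T (ev x)) A"
  proof (rule inj_onI)
    fix x y assume "x \<in> A" "y \<in> A" and Teq: "T (ev x) = T (ev y)"
    have "(ev x :: 'a \<Rightarrow> 'k) \<in> Vs S" "(ev y :: 'a \<Rightarrow> 'k) \<in> Vs S" using A \<open>x \<in> A\<close> \<open>y \<in> A\<close> by (auto intro: Vs_ev)
    with Teq have "(ev x :: 'a \<Rightarrow> 'k) = ev y"
      by (metis goodD(5)[OF g \<open>ev x \<in> Vs S\<close>] goodD(5)[OF g \<open>ev y \<in> Vs S\<close>])
    then show "x = y" by (rule ev_inj)
  qed
  show "fv.independent ((\<lambda>x. T (ev x)) ` A)"
  proof (rule fv.independent_if_scalars_zero)
    show "finite ((\<lambda>x. T (ev x)) ` A)" using finA by simp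
  next
    fix f v assume s0: "(\<Sum>w\<in>(\<lambda>x. T (ev x)) ` A. sc (f w) w) = 0" and v: "v \<in> (\<lambda>x. T (ev x)) ` A"
    then obtain x where x: "x \<in> A" "v = T (ev x)" by blast
    define m where "m = (\<Sum>y\<in>A. sc (f (T (ev y))) (ev y))"
    have "(\<Sum>w\<in>(\<lambda>x. T (ev x)) ` A. sc (f w) w) = (\<Sum>y\<in>A. sc (f (T (ev y))) (T (ev y)))"
      by (simp add: sum.reindex[OF inj])
    also have "\<dots> = T m" unfolding m_def by (simp only: lin_sum[OF goodD(1)[OF g]] lin_sc[OF goodD(1)[OF g]])
    finally have Tm: "T m = 0" using s0 by simp
    have mV: "m \<in> Vs S" unfolding m_def using A by (intro Vs_sum_closed Vs_sc Vs_ev) auto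
    have "m = U (T m)" using goodD(5)[OF g mV] by simp
    also have "\<dots> = 0" using Tm goodD(2)[OF g] by (simp add: lin_zero)
    finally have "m x = 0" by simp
    moreover have "m x = f (T (ev x))" unfolding m_def using finA x by (simp add: sum_ev_apply)
    ultimately show "f v = 0" using x by simp
  qed
qed

lemma good_card_le:
  fixes T :: "('a \<Rightarrow> 'k::field) \<Rightarrow> ('b \<Rightarrow> 'k)"
  assumes g: "good S E S' E' T U" and fin: "finite S" "finite S'"
  shows "card S \<le> card S'"
proof -
  have ind: "fv.independent ((\<lambda>x. T (ev x)) ` S)" and inj: "inj_on (\<lambda>x. T (ev x)) S"
    using indep_image[OF g fin(1) order_refl] by auto
  have sub: "(\<lambda>x. T (ev x)) ` S \<subseteq> fv.span (ev ` S' :: ('b \<Rightarrow> 'k) set)"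
  proof (rule image_subsetI)
    fix x show "T (ev x) \<in> fv.span (ev ` S')" using Vs_span[OF fin(2) goodD(3)[OF g]] .
  qed
  then have "card ((\<lambda>x. T (ev x)) ` S) \<le> card (ev ` S' :: ('b \<Rightarrow> 'k) set)"
    using fv.independent_span_bound[OF finite_imageI[OF fin(2)] ind sub] by simp
  also have "\<dots> \<le> card S'" by (rule card_image_le[OF fin(2)])
  finally show ?thesis using card_image[OF inj] by simp
qed

lemma good_card_eq:
  assumes g: "good S E S' E' T U" and fin: "finite S" "finite S'"
  shows "card S = card S'"
  using good_card_le[OF g fin] good_card_le[OF good_sym[OF g] fin(2,1)] by simp

lemma exchange_span:
  assumes ind: "fv.independent Y" and fin: "finite X" and sub: "Y \<subseteq> fv.span X"
    and c: "card X \<le> card Y"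
  shows "X \<subseteq> fv.span Y"
proof
  fix x assume xX: "x \<in> X"
  show "x \<in> fv.span Y"
  proof (rule ccontr)
    assume nx: "x \<notin> fv.span Y"
    have fY: "finite Y" "card Y \<le> card X" using fv.independent_span_bound[OF fin ind sub] by auto
    have "fv.independent (insert x Y)" by (rule fv.independent_insertI[OF nx ind])
    moreover have "insert x Y \<subseteq> fv.span X" using sub xX fv.span_base by blast
    ultimately have "card (insert x Y) \<le> card X" using fv.independent_span_bound[OF fin] by blast
    moreover have "x \<notin> Y" using nx fv.span_base by blast
    ultimately show False using fY c by simp
  qed
qed


definition deg :: "'x set set \<Rightarrow> 'x \<Rightarrow> nat" where
  "deg E x = card {y. {x,y} \<in> E}"

lemma sg_edge:
  assumes "simple_graph S E" "{x,y} \<in> E"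
  shows "x \<in> S \<and> y \<in> S \<and> x \<noteq> y"
proof -
  obtain a b where ab: "a \<in> S" "b \<in> S" "a \<noteq> b" "{x,y} = {a,b}"
    using assms unfolding simple_graph_def by blast
  then show ?thesis by (auto simp: doubleton_eq_iff)
qed

lemma sg_finite: "simple_graph S E \<Longrightarrow> finite S" by (simp add: simple_graph_def)

lemma sg_nbr_sub: "simple_graph S E \<Longrightarrow> {y. {x,y} \<in> E} \<subseteq> S - {x}"
  using sg_edge by fastforce

lemma sg_no_loop: "simple_graph S E \<Longrightarrow> {x} \<notin> E"
  using sg_edge[of S E x x] by auto

lemma Bf_ev_zero:
  assumes "{a,b} \<notin> E" shows "Bf E (ev a) (ev b) = (0 :: _ \<Rightarrow> 'k::field)"
proof (rule ext, clarify)
  fix p q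
  show "Bf E (ev a) (ev b) (p,q) = (0 :: _ \<Rightarrow> 'k) (p,q)"
    using assms by (auto simp: Bf_def ev_apply insert_commute)
qed

lemma Bf_add_right: "Bf E v (u + u') = Bf E v u + Bf E v u'"
  by (auto simp: Bf_def fun_eq_iff algebra_simps)

lemma Bf_sc_right: "Bf E v (sc c u) = (\<lambda>z. c * Bf E v u z)"
  by (auto simp: Bf_def fun_eq_iff algebra_simps)

lemma Bf_zero_right: "Bf E v 0 = 0"
  by (auto simp: Bf_def fun_eq_iff)

lemma Bf_subspace: "fv.subspace {u. Bf E v u = 0}"
  unfolding fv.subspace_def by (auto simp: Bf_add_right Bf_sc_right Bf_zero_right)

lemma decomp:
  fixes v :: "'x \<Rightarrow> 'k::field"
  assumes sg: "simple_graph S E" and gS: "\<gamma> \<in> S" and vg: "v \<gamma> \<noteq> 0"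
  defines "R \<equiv> {y\<in>S. y \<noteq> \<gamma> \<and> {\<gamma>,y} \<notin> E}"
  defines "vh \<equiv> ev \<gamma> + (\<Sum>\<rho>\<in>{\<rho>. {\<gamma>,\<rho>}\<in>E}. sc (v \<rho> / v \<gamma>) (ev \<rho>))"
  shows "\<And>u. u \<in> Vs S \<Longrightarrow> Bf E v u = 0 \<Longrightarrow> u \<in> fv.span (insert vh (ev ` R))"
    and "card (insert vh (ev ` R)) + deg E \<gamma> \<le> card S"
proof -
  define N where "N = {\<rho>. {\<gamma>,\<rho>}\<in>E}"
  have finS: "finite S" using sg sg_finite by blast
  have NS: "N \<subseteq> S - {\<gamma>}" unfolding N_def using sg_nbr_sub[OF sg] .
  have finN: "finite N" using NS finS finite_subset by blast
  have finR: "finite R" unfolding R_def using finS by simp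
  have gN: "\<gamma> \<notin> N" using NS by blast
  {
    fix u assume uV: "u \<in> Vs S" and B0: "Bf E v u = 0"
    have rel: "u z = v z / v \<gamma> * u \<gamma>" if "z \<in> N" for z
    proof -
      have "Bf E v u (\<gamma>, z) = 0" using B0 by simp
      then have "v \<gamma> * u z - v z * u \<gamma> = 0" using that unfolding N_def Bf_def by simp
      then show ?thesis using vg by (simp add: field_simps)
    qed
    have eq: "u = sc (u \<gamma>) vh + (\<Sum>y\<in>R. sc (u y) (ev y))"
    proof (rule ext)
      fix z
      have vhz: "vh z = (if z = \<gamma> then 1 else 0) + (if z \<in> N then v z / v \<gamma> else 0)"
        unfolding vh_def N_def[symmetric] using finN by (simp add: sum_ev_apply ev_apply)
      have Rz: "(\<Sum>y\<in>R. sc (u y) (ev y)) z = (if z \<in> R then u z else 0)"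
        using finR by (simp add: sum_ev_apply)
      show "u z = (sc (u \<gamma>) vh + (\<Sum>y\<in>R. sc (u y) (ev y))) z"
      proof (cases "z = \<gamma>")
        case True
        have "\<gamma> \<notin> R" unfolding R_def by simp
        have a: "vh \<gamma> = 1" using vhz True gN by simp
        have b: "(\<Sum>y\<in>R. sc (u y) (ev y)) \<gamma> = 0" using Rz True \<open>\<gamma> \<notin> R\<close> by simp
        show ?thesis using a b True by simp
      next
        case zg: False
        show ?thesis
        proof (cases "z \<in> N")
          case True
          then have "z \<notin> R" unfolding R_def N_def by auto
          then show ?thesis using True zg rel[OF True] by (simp add: vhz Rz)
        next
          case zN: False
          show ?thesis
          proof (cases "z \<in> S")
            case True
            then have "z \<in> R" using zg zN unfolding R_def N_def by auto
            then show ?thesis using zg zN by (simp add: vhz Rz)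
          next
            case False
            then have "z \<notin> R" "u z = 0" using uV unfolding R_def Vs_def by auto
            then show ?thesis using zg zN by (simp add: vhz Rz)
          qed
        qed
      qed
    qed
    have "sc (u \<gamma>) vh + (\<Sum>y\<in>R. sc (u y) (ev y)) \<in> fv.span (insert vh (ev ` R))"
      by (intro fv.span_add fv.span_scale fv.span_sum fv.span_base) auto
    then show "u \<in> fv.span (insert vh (ev ` R))" using eq by simp
  }
  have "card (insert vh (ev ` R)) \<le> Suc (card (ev ` R :: ('x \<Rightarrow> 'k) set))"
    using finR by (simp add: card_insert_if)
  also have "card (ev ` R :: ('x \<Rightarrow> 'k) set) \<le> card R" using card_image_le finR by blast
  finally have c1: "card (insert vh (ev ` R)) \<le> Suc (card R)" by simp
  have Sdec: "S = insert \<gamma> (N \<union> R)" using NS gS unfolding R_def N_def by auto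
  have gR: "\<gamma> \<notin> R" unfolding R_def by simp
  have "card S = card (insert \<gamma> (N \<union> R))" using Sdec by (rule arg_cong)
  also have "\<dots> = Suc (card (N \<union> R))" using gN gR finN finR by (simp add: card_insert_if)
  also have "card (N \<union> R) = card N + card R"
    by (rule card_Un_disjoint[OF finN finR]) (auto simp: R_def N_def)
  finally have "card S = Suc (card N + card R)" .
  moreover have "deg E \<gamma> = card N" unfolding deg_def N_def ..
  ultimately show "card (insert vh (ev ` R)) + deg E \<gamma> \<le> card S" using c1 by simp
qed



lemma claimE:
  fixes T :: "('a \<Rightarrow> 'k::field) \<Rightarrow> ('b \<Rightarrow> 'k)"
  assumes g: "good S E S' E' T U" and sg: "simple_graph S E" and sg': "simple_graph S' E'"
    and aS: "\<alpha> \<in> S"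
  shows "\<exists>\<gamma>\<in>S'. T (ev \<alpha>) \<gamma> \<noteq> 0 \<and> deg E \<alpha> \<le> deg E' \<gamma>"
proof -
  have finS: "finite S" and finS': "finite S'" using sg sg' sg_finite by auto
  define v where "v = T (ev \<alpha>)"
  have vV: "v \<in> Vs S'" unfolding v_def using goodD(3)[OF g] .
  have Uv: "U v = ev \<alpha>" unfolding v_def using goodD(5)[OF g Vs_ev[OF aS]] .
  have "U v = U (\<Sum>\<gamma>\<in>S'. sc (v \<gamma>) (ev \<gamma>))" using Vs_sum[OF finS' vV] by simp
  also have "\<dots> = (\<Sum>\<gamma>\<in>S'. sc (v \<gamma>) (U (ev \<gamma>)))"
    by (simp only: lin_sum[OF goodD(2)[OF g]] lin_sc[OF goodD(2)[OF g]])
  finally have "U v \<alpha> = (\<Sum>\<gamma>\<in>S'. v \<gamma> * U (ev \<gamma>) \<alpha>)" by (simp add: sum_apply_fun)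
  then have "(\<Sum>\<gamma>\<in>S'. v \<gamma> * U (ev \<gamma>) \<alpha>) \<noteq> 0" using Uv by (simp add: ev_apply)
  then obtain \<gamma> where gS': "\<gamma> \<in> S'" and nz: "v \<gamma> * U (ev \<gamma>) \<alpha> \<noteq> 0"
    by (meson sum.neutral)
  define q where "q = U (ev \<gamma>)"
  have qa: "q \<alpha> \<noteq> 0" and vg: "v \<gamma> \<noteq> 0" using nz unfolding q_def by auto
  have qV: "q \<in> Vs S" unfolding q_def using goodD(4)[OF g] .
  define A where "A = {y\<in>S'. {\<gamma>,y} \<notin> E'}"
  have AS': "A \<subseteq> S'" unfolding A_def by auto
  have gs: "good S' E' S E U T" by (rule good_sym[OF g])
  have ind: "fv.independent ((\<lambda>y. U (ev y)) ` A)" and inj: "inj_on (\<lambda>y. U (ev y)) A"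
    using indep_image[OF gs finS' AS'] by auto
  define R where "R = {y\<in>S. y \<noteq> \<alpha> \<and> {\<alpha>,y} \<notin> E}"
  define vh where "vh = ev \<alpha> + (\<Sum>\<rho>\<in>{\<rho>. {\<alpha>,\<rho>}\<in>E}. sc (q \<rho> / q \<alpha>) (ev \<rho>))"
  note dc1 = decomp(1)[of S E \<alpha> q, OF sg aS qa, folded R_def vh_def]
  note dc2 = decomp(2)[of S E \<alpha> q, OF sg aS qa, folded R_def vh_def]
  have sub: "(\<lambda>y. U (ev y)) ` A \<subseteq> fv.span (insert vh (ev ` R))"
  proof (rule image_subsetI)
    fix y assume yA: "y \<in> A"
    have eV: "(ev \<gamma> :: 'b \<Rightarrow> 'k) \<in> Vs S'" "(ev y :: 'b \<Rightarrow> 'k) \<in> Vs S'"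
      using gS' yA AS' by (auto intro: Vs_ev)
    have nE: "{\<gamma>,y} \<notin> E'" using yA unfolding A_def by simp
    have b0: "Bf E' (ev \<gamma>) (ev y) = (0 :: _ \<Rightarrow> 'k)" by (rule Bf_ev_zero[OF nE])
    have "Bf E q (U (ev y)) = 0" unfolding q_def by (rule iffD1[OF goodD(7)[OF gs eV] b0])
    then show "U (ev y) \<in> fv.span (insert vh (ev ` R))" by (rule dc1[OF goodD(4)[OF g]])
  qed
  have finX: "finite (insert vh (ev ` R))" using finS unfolding R_def by simp
  have "card ((\<lambda>y. U (ev y)) ` A) \<le> card (insert vh (ev ` R))"
    using fv.independent_span_bound[OF finX ind sub] by simp
  then have c1: "card A \<le> card (insert vh (ev ` R))" using card_image[OF inj] by simp
  have NS': "{y. {\<gamma>,y} \<in> E'} \<subseteq> S'" using sg_nbr_sub[OF sg'] by blast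
  have Sdec: "S' = A \<union> {y. {\<gamma>,y} \<in> E'}" using NS' unfolding A_def by auto
  have finA: "finite A" using finS' AS' finite_subset by blast
  have finN: "finite {y. {\<gamma>,y} \<in> E'}" using finS' NS' finite_subset by blast
  have "card S' = card (A \<union> {y. {\<gamma>,y} \<in> E'})" using Sdec by (rule arg_cong)
  also have "\<dots> = card A + card {y. {\<gamma>,y} \<in> E'}"
    by (rule card_Un_disjoint[OF finA finN]) (auto simp: A_def)
  finally have "card S' = card A + deg E' \<gamma>" unfolding deg_def .
  moreover have "card S = card S'" using good_card_eq[OF g finS finS'] .
  ultimately show ?thesis using c1 dc2 gS' vg unfolding v_def by auto
qed


definition domi :: "'x set set \<Rightarrow> 'x \<Rightarrow> 'x \<Rightarrow> bool" where
  "domi E \<delta> \<gamma> \<longleftrightarrow> (\<forall>y. {\<delta>,y} \<in> E \<longrightarrow> y = \<gamma> \<or> {\<gamma>,y} \<in> E)"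

lemma domi_refl: "domi E \<gamma> \<gamma>" by (simp add: domi_def)

lemma domi_trans:
  assumes "domi E a b" "domi E b c" shows "domi E a c"
  unfolding domi_def
proof (intro allI impI)
  fix y assume ay: "{a,y} \<in> E"
  show "y = c \<or> {c,y} \<in> E"
  proof (cases "y = b")
    case False
    then have "{b,y} \<in> E" using assms(1) ay unfolding domi_def by blast
    then show ?thesis using assms(2) unfolding domi_def by blast
  next
    case yb: True
    then have "{b,a} \<in> E" using ay by (simp add: insert_commute)
    then have "a = c \<or> {c,a} \<in> E" using assms(2) unfolding domi_def by blast
    then show ?thesis
    proof
      assume "a = c" then show ?thesis using ay yb by (simp add: insert_commute)
    next
      assume "{c,a} \<in> E"
      then have "{a,c} \<in> E" by (simp add: insert_commute)
      then have "c = b \<or> {b,c} \<in> E" using assms(1) unfolding domi_def by blast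
      then show ?thesis using yb by (auto simp: insert_commute)
    qed
  qed
qed

lemma claimD:
  fixes T :: "('a \<Rightarrow> 'k::field) \<Rightarrow> ('b \<Rightarrow> 'k)"
  assumes g: "good S E S' E' T U" and sg: "simple_graph S E" and sg': "simple_graph S' E'"
    and aS: "\<alpha> \<in> S"
  shows "\<exists>\<gamma>\<in>S'. T (ev \<alpha>) \<gamma> \<noteq> 0 \<and> (\<forall>\<delta>. T (ev \<alpha>) \<delta> \<noteq> 0 \<longrightarrow> domi E' \<delta> \<gamma>)"
proof -
  have finS: "finite S" and finS': "finite S'" using sg sg' sg_finite by auto
  obtain \<gamma> where gS': "\<gamma> \<in> S'" and vg: "T (ev \<alpha>) \<gamma> \<noteq> 0" and dg: "deg E \<alpha> \<le> deg E' \<gamma>"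
    using claimE[OF g sg sg' aS] by blast
  define v where "v = T (ev \<alpha>)"
  have vg': "v \<gamma> \<noteq> 0" using vg unfolding v_def .
  define A where "A = {x\<in>S. {\<alpha>,x} \<notin> E}"
  have AS: "A \<subseteq> S" unfolding A_def by auto
  have ind: "fv.independent ((\<lambda>x. T (ev x)) ` A)" and inj: "inj_on (\<lambda>x. T (ev x)) A"
    using indep_image[OF g finS AS] by auto
  define R where "R = {y\<in>S'. y \<noteq> \<gamma> \<and> {\<gamma>,y} \<notin> E'}"
  define vh where "vh = ev \<gamma> + (\<Sum>\<rho>\<in>{\<rho>. {\<gamma>,\<rho>}\<in>E'}. sc (v \<rho> / v \<gamma>) (ev \<rho>))"
  note dc1 = decomp(1)[of S' E' \<gamma> v, OF sg' gS' vg', folded R_def vh_def]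
  note dc2 = decomp(2)[of S' E' \<gamma> v, OF sg' gS' vg', folded R_def vh_def]
  have inC: "Bf E' v (T (ev x)) = 0" if "x \<in> A" for x
  proof -
    have xS: "x \<in> S" and nE: "{\<alpha>,x} \<notin> E" using that unfolding A_def by auto
    have eV: "(ev \<alpha> :: 'a \<Rightarrow> 'k) \<in> Vs S" "(ev x :: 'a \<Rightarrow> 'k) \<in> Vs S"
      using aS xS by (auto intro: Vs_ev)
    have b0: "Bf E (ev \<alpha>) (ev x) = (0 :: _ \<Rightarrow> 'k)" by (rule Bf_ev_zero[OF nE])
    show ?thesis unfolding v_def by (rule iffD1[OF goodD(7)[OF g eV] b0])
  qed
  have sub: "(\<lambda>x. T (ev x)) ` A \<subseteq> fv.span (insert vh (ev ` R))"
  proof (rule image_subsetI)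
    fix x assume "x \<in> A"
    then show "T (ev x) \<in> fv.span (insert vh (ev ` R))" by (rule dc1[OF goodD(3)[OF g] inC])
  qed
  have finX: "finite (insert vh (ev ` R))" using finS' unfolding R_def by simp
  have NS: "{y. {\<alpha>,y} \<in> E} \<subseteq> S" using sg_nbr_sub[OF sg] by blast
  have Sdec: "S = A \<union> {y. {\<alpha>,y} \<in> E}" using NS unfolding A_def by auto
  have finA: "finite A" using finS AS finite_subset by blast
  have finN: "finite {y. {\<alpha>,y} \<in> E}" using finS NS finite_subset by blast
  have "card S = card (A \<union> {y. {\<alpha>,y} \<in> E})" using Sdec by (rule arg_cong)
  also have "\<dots> = card A + card {y. {\<alpha>,y} \<in> E}"
    by (rule card_Un_disjoint[OF finA finN]) (auto simp: A_def)
  finally have cS: "card S = card A + deg E \<alpha>" unfolding deg_def .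
  have "card S = card S'" using good_card_eq[OF g finS finS'] .
  then have "card (insert vh (ev ` R)) \<le> card ((\<lambda>x. T (ev x)) ` A)"
    using cS dc2 dg card_image[OF inj] by simp
  then have spY: "insert vh (ev ` R) \<subseteq> fv.span ((\<lambda>x. T (ev x)) ` A)"
    by (rule exchange_span[OF ind finX sub])
  have "fv.span ((\<lambda>x. T (ev x)) ` A) \<subseteq> {u. Bf E' v u = 0}"
    by (rule fv.span_minimal[OF _ Bf_subspace]) (use inC in blast)
  with spY have Csub: "insert vh (ev ` R) \<subseteq> {u. Bf E' v u = 0}" by (rule order_trans)
  have "domi E' \<delta> \<gamma>" if vd: "v \<delta> \<noteq> 0" for \<delta>
    unfolding domi_def
  proof (intro allI impI)
    fix y assume dy: "{\<delta>,y} \<in> E'"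
    show "y = \<gamma> \<or> {\<gamma>,y} \<in> E'"
    proof (rule ccontr)
      assume "\<not> (y = \<gamma> \<or> {\<gamma>,y} \<in> E')"
      moreover have "y \<in> S'" and dny: "\<delta> \<noteq> y" using sg_edge[OF sg' dy] by auto
      ultimately have "y \<in> R" unfolding R_def by auto
      then have "Bf E' v (ev y) = 0" using Csub by auto
      then have "Bf E' v (ev y) (\<delta>, y) = 0" by simp
      then have "v \<delta> = 0" using dy dny by (simp add: Bf_def ev_apply)
      then show False using vd by simp
    qed
  qed
  then show ?thesis using gS' vg unfolding v_def by blast
qed

lemma twin:
  fixes T :: "('a \<Rightarrow> 'k::field) \<Rightarrow> ('b \<Rightarrow> 'k)"
  assumes g: "good S E S' E' T U" and sg: "simple_graph S E"
    and aS: "\<alpha> \<in> S" and bS: "\<beta> \<in> S" and ab: "\<alpha> \<noteq> \<beta>"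
    and vg: "T (ev \<alpha>) \<gamma> \<noteq> 0" and dw: "\<forall>\<delta>. T (ev \<beta>) \<delta> \<noteq> 0 \<longrightarrow> domi E' \<delta> \<gamma>"
  shows "\<forall>x. {\<beta>,x} \<in> E \<and> x \<noteq> \<alpha> \<longrightarrow> {\<alpha>,x} \<in> E"
proof (intro allI impI, elim conjE)
  fix x assume bx: "{\<beta>,x} \<in> E" and xa: "x \<noteq> \<alpha>"
  show "{\<alpha>,x} \<in> E"
  proof (rule ccontr)
    assume nax: "{\<alpha>,x} \<notin> E"
    have xS: "x \<in> S" and xb: "\<beta> \<noteq> x" using sg_edge[OF sg bx] by auto
    define v where "v = T (ev \<alpha>)"
    define w where "w = T (ev \<beta>)"
    define t where "t = T (ev x)"
    have eV: "(ev \<alpha> :: 'a \<Rightarrow> 'k) \<in> Vs S" "(ev x :: 'a \<Rightarrow> 'k) \<in> Vs S" "(ev \<beta> :: 'a \<Rightarrow> 'k) \<in> Vs S"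
      using aS xS bS by (auto intro: Vs_ev)
    have b0: "Bf E (ev \<alpha>) (ev x) = (0 :: _ \<Rightarrow> 'k)" by (rule Bf_ev_zero[OF nax])
    have Bvt: "Bf E' v t = 0" unfolding v_def t_def by (rule iffD1[OF goodD(7)[OF g eV(1,2)] b0])
    define c where "c = t \<gamma> / v \<gamma>"
    define z where "z = t - sc c v"
    have vg': "v \<gamma> \<noteq> 0" using vg unfolding v_def .
    have zg: "z \<gamma> = 0" unfolding z_def c_def using vg' by simp
    have zr: "z \<rho> = 0" if "{\<gamma>,\<rho>} \<in> E'" for \<rho>
    proof -
      have "Bf E' v t (\<gamma>,\<rho>) = 0" using Bvt by simp
      then have "v \<gamma> * t \<rho> - v \<rho> * t \<gamma> = 0" using that by (simp add: Bf_def)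
      then show ?thesis unfolding z_def c_def using vg' by (simp add: field_simps)
    qed
    have zz: "z q = 0" if "w p \<noteq> 0" "{p,q} \<in> E'" for p q
    proof -
      have "domi E' p \<gamma>" using dw that(1) unfolding w_def by blast
      then have "q = \<gamma> \<or> {\<gamma>,q} \<in> E'" using that(2) unfolding domi_def by blast
      then show ?thesis using zg zr by blast
    qed
    have Bwz: "Bf E' w z = 0"
    proof (rule ext, clarify)
      fix p q
      show "Bf E' w z (p,q) = 0 (p,q)"
      proof (cases "{p,q} \<in> E'")
        case True
        have t1: "w p * z q = 0" using zz[of p q] True by (cases "w p = 0") auto
        have "{q,p} \<in> E'" using True by (simp add: insert_commute)
        then have t2: "w q * z p = 0" using zz[of q p] by (cases "w q = 0") auto
        have "Bf E' w z (p,q) = w p * z q - w q * z p" using True by (simp add: Bf_def)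
        also have "\<dots> = 0" unfolding t1 t2 by simp
        finally show ?thesis by simp
      qed (simp add: Bf_def)
    qed
    have Tz: "z = T (ev x - sc c (ev \<alpha>))"
      unfolding z_def t_def v_def by (simp only: lin_diff[OF goodD(1)[OF g]] lin_sc[OF goodD(1)[OF g]])
    have mV: "ev x - sc c (ev \<alpha>) \<in> Vs S" using eV by (intro Vs_diff Vs_sc) auto
    have "Bf E (ev \<beta>) (ev x - sc c (ev \<alpha>)) = 0"
      using iffD2[OF goodD(7)[OF g eV(3) mV]] Bwz Tz unfolding w_def by simp
    then have "Bf E (ev \<beta>) (ev x - sc c (ev \<alpha>)) (\<beta>, x) = 0" by simp
    then show False using bx xa xb by (simp add: Bf_def ev_apply)
  qed
qed



definition tau :: "'k::field \<Rightarrow> 'x \<Rightarrow> 'x \<Rightarrow> ('x \<Rightarrow> 'k) \<Rightarrow> ('x \<Rightarrow> 'k)" where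
  "tau c \<alpha> \<beta> u = (\<lambda>x. if x = \<beta> then u \<beta> - c * u \<alpha> else u x)"

lemma lin_tau: "lin (tau c \<alpha> \<beta>)"
  by (auto simp: lin_def tau_def fun_eq_iff algebra_simps)

lemma tau_inv: "\<alpha> \<noteq> \<beta> \<Longrightarrow> tau (-c) \<alpha> \<beta> (tau c \<alpha> \<beta> u) = u"
  by (auto simp: tau_def fun_eq_iff)

lemma tau_inv2: "\<alpha> \<noteq> \<beta> \<Longrightarrow> tau c \<alpha> \<beta> (tau (-c) \<alpha> \<beta> u) = u"
  by (auto simp: tau_def fun_eq_iff)

lemma tau_Vs: "\<beta> \<in> S \<Longrightarrow> u \<in> Vs S \<Longrightarrow> tau c \<alpha> \<beta> u \<in> Vs S"
  by (auto simp: tau_def Vs_def)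

lemma tau_Bf:
  fixes u u' :: "'x \<Rightarrow> 'k::field"
  assumes ab: "\<alpha> \<noteq> \<beta>" and dm: "\<forall>x. {\<beta>,x} \<in> E \<and> x \<noteq> \<alpha> \<longrightarrow> {\<alpha>,x} \<in> E"
    and B0: "Bf E u u' = 0"
  shows "Bf E (tau c \<alpha> \<beta> u) (tau c \<alpha> \<beta> u') = 0"
proof -
  have h: "u p * u' q - u q * u' p = 0" if "{p,q} \<in> E" for p q
  proof -
    have "Bf E u u' (p,q) = 0" using B0 by simp
    then show ?thesis using that by (simp add: Bf_def)
  qed
  have ha: "u \<alpha> * u' q - u q * u' \<alpha> = 0" if "{\<beta>,q} \<in> E" "q \<noteq> \<beta>" for q
  proof (cases "q = \<alpha>")
    case True then show ?thesis by simp
  next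
    case False
    then have "{\<alpha>,q} \<in> E" using dm that by blast
    then show ?thesis by (rule h)
  qed
  let ?tu = "tau c \<alpha> \<beta> u" and ?tu' = "tau c \<alpha> \<beta> u'"
  show ?thesis
  proof (rule ext, clarify)
    fix p q
    show "Bf E ?tu ?tu' (p,q) = 0 (p,q)"
    proof (cases "{p,q} \<in> E")
      case False then show ?thesis by (simp add: Bf_def)
    next
      case pq: True
      have "?tu p * ?tu' q - ?tu q * ?tu' p = 0"
      proof (cases "p = \<beta>")
        case pb: True
        show ?thesis
        proof (cases "q = \<beta>")
          case True then show ?thesis using pb by simp
        next
          case qb: False
          have "?tu p * ?tu' q - ?tu q * ?tu' p
              = (u \<beta> * u' q - u q * u' \<beta>) - c * (u \<alpha> * u' q - u q * u' \<alpha>)"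
            using pb qb by (simp add: tau_def algebra_simps)
          also have "\<dots> = 0" using h[of \<beta> q] ha[of q] pq pb qb by simp
          finally show ?thesis .
        qed
      next
        case pb: False
        show ?thesis
        proof (cases "q = \<beta>")
          case qb: True
          have pq': "{\<beta>,p} \<in> E" using pq qb by (simp add: insert_commute)
          have "?tu p * ?tu' q - ?tu q * ?tu' p
              = (u p * u' \<beta> - u \<beta> * u' p) + c * (u \<alpha> * u' p - u p * u' \<alpha>)"
            using pb qb by (simp add: tau_def algebra_simps)
          also have "\<dots> = 0" using h[of p \<beta>] ha[of p] pq pq' pb qb by simp
          finally show ?thesis .
        next
          case qb: False
          then show ?thesis using h[OF pq] pb by (simp add: tau_def)
        qed
      qed
      then show ?thesis using pq by (simp add: Bf_def)
    qed
  qed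
qed

lemma tau_Bf_iff:
  fixes u u' :: "'x \<Rightarrow> 'k::field"
  assumes ab: "\<alpha> \<noteq> \<beta>" and dm: "\<forall>x. {\<beta>,x} \<in> E \<and> x \<noteq> \<alpha> \<longrightarrow> {\<alpha>,x} \<in> E"
  shows "Bf E (tau c \<alpha> \<beta> u) (tau c \<alpha> \<beta> u') = 0 \<longleftrightarrow> Bf E u u' = 0"
proof
  assume "Bf E (tau c \<alpha> \<beta> u) (tau c \<alpha> \<beta> u') = 0"
  then have "Bf E (tau (-c) \<alpha> \<beta> (tau c \<alpha> \<beta> u)) (tau (-c) \<alpha> \<beta> (tau c \<alpha> \<beta> u')) = 0"
    by (rule tau_Bf[OF ab dm])
  then show "Bf E u u' = 0" by (simp only: tau_inv[OF ab])
qed (rule tau_Bf[OF ab dm])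

lemma good_tau:
  fixes T :: "('a \<Rightarrow> 'k::field) \<Rightarrow> ('b \<Rightarrow> 'k)"
  assumes g: "good S E S' E' T U" and ab: "\<alpha> \<noteq> \<beta>" and bS: "\<beta> \<in> S"
    and dm: "\<forall>x. {\<beta>,x} \<in> E \<and> x \<noteq> \<alpha> \<longrightarrow> {\<alpha>,x} \<in> E"
  shows "good S E S' E' (T \<circ> tau c \<alpha> \<beta>) (tau (-c) \<alpha> \<beta> \<circ> U)"
  unfolding good_def
proof (intro conjI)
  show "lin (T \<circ> tau c \<alpha> \<beta>)" by (rule lin_comp[OF goodD(1)[OF g] lin_tau])
  show "lin (tau (-c) \<alpha> \<beta> \<circ> U)" by (rule lin_comp[OF lin_tau goodD(2)[OF g]])
  show "\<forall>u. (T \<circ> tau c \<alpha> \<beta>) u \<in> Vs S'" using goodD(3)[OF g] by simp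
  show "\<forall>u. (tau (-c) \<alpha> \<beta> \<circ> U) u \<in> Vs S" using tau_Vs[OF bS goodD(4)[OF g]] by simp
  show "\<forall>u\<in>Vs S. (tau (-c) \<alpha> \<beta> \<circ> U) ((T \<circ> tau c \<alpha> \<beta>) u) = u"
  proof
    fix u :: "'a \<Rightarrow> 'k" assume uV: "u \<in> Vs S"
    have "tau c \<alpha> \<beta> u \<in> Vs S" by (rule tau_Vs[OF bS uV])
    then show "(tau (-c) \<alpha> \<beta> \<circ> U) ((T \<circ> tau c \<alpha> \<beta>) u) = u"
      using goodD(5)[OF g] tau_inv[OF ab, of c u] by simp
  qed
  show "\<forall>u\<in>Vs S'. (T \<circ> tau c \<alpha> \<beta>) ((tau (-c) \<alpha> \<beta> \<circ> U) u) = u"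
  proof
    fix u :: "'b \<Rightarrow> 'k" assume uV: "u \<in> Vs S'"
    show "(T \<circ> tau c \<alpha> \<beta>) ((tau (-c) \<alpha> \<beta> \<circ> U) u) = u"
      using goodD(6)[OF g uV] tau_inv2[OF ab, of c "U u"] by simp
  qed
  show "\<forall>u\<in>Vs S. \<forall>u'\<in>Vs S. Bf E u u' = 0 \<longleftrightarrow> Bf E' ((T \<circ> tau c \<alpha> \<beta>) u) ((T \<circ> tau c \<alpha> \<beta>) u') = 0"
  proof (intro ballI)
    fix u u' :: "'a \<Rightarrow> 'k" assume uV: "u \<in> Vs S" and uV': "u' \<in> Vs S"
    have tV: "tau c \<alpha> \<beta> u \<in> Vs S" "tau c \<alpha> \<beta> u' \<in> Vs S" using tau_Vs[OF bS] uV uV' by auto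
    show "Bf E u u' = 0 \<longleftrightarrow> Bf E' ((T \<circ> tau c \<alpha> \<beta>) u) ((T \<circ> tau c \<alpha> \<beta>) u') = 0"
      using tau_Bf_iff[OF ab dm, of c u u'] goodD(7)[OF g tV] by simp
  qed
qed

definition lead :: "('b \<Rightarrow> nat) \<Rightarrow> 'b set \<Rightarrow> ('b \<Rightarrow> 'k::field) \<Rightarrow> 'b" where
  "lead key S' v = arg_max key (\<lambda>\<gamma>. \<gamma> \<in> S' \<and> v \<gamma> \<noteq> 0)"

lemma lead_prop:
  assumes fin: "finite S'" and gS: "\<gamma> \<in> S'" and vg: "v \<gamma> \<noteq> 0"
  shows "lead key S' v \<in> S' \<and> v (lead key S' v) \<noteq> 0 \<and>
    (\<forall>\<delta>\<in>S'. v \<delta> \<noteq> 0 \<longrightarrow> key \<delta> \<le> key (lead key S' v))"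
proof -
  have b: "\<forall>y. (y \<in> S' \<and> v y \<noteq> 0) \<longrightarrow> key y < Suc (Max (key ` S'))"
    using fin by (auto simp: le_imp_less_Suc)
  show ?thesis
    using arg_max_nat_lemma[of "\<lambda>\<gamma>. \<gamma> \<in> S' \<and> v \<gamma> \<noteq> 0" \<gamma> key, OF _ b] gS vg
    unfolding lead_def by blast
qed



lemma mainind:
  fixes key :: "'b \<Rightarrow> nat"
  assumes sg: "simple_graph S E" and sg': "simple_graph S' E'"
    and kinj: "inj_on key S'"
    and kcomp: "\<forall>\<delta>\<in>S'. \<forall>\<gamma>\<in>S'. domi E' \<delta> \<gamma> \<and> \<not> domi E' \<gamma> \<delta> \<longrightarrow> key \<delta> < key \<gamma>"
  shows "\<forall>(T :: ('a \<Rightarrow> 'k::field) \<Rightarrow> ('b \<Rightarrow> 'k)) U. good S E S' E' T U \<longrightarrow>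
     (\<Sum>x\<in>S. key (lead key S' (T (ev x)))) = n \<longrightarrow>
     (\<exists>\<sigma>. inj_on \<sigma> S \<and> \<sigma> ` S \<subseteq> S' \<and> (\<forall>x\<in>S. \<forall>y\<in>S. x \<noteq> y \<and> {x,y} \<notin> E \<longrightarrow> {\<sigma> x, \<sigma> y} \<notin> E'))"
proof (induction n rule: less_induct)
  case (less n)
  have finS: "finite S" and finS': "finite S'" using sg sg' sg_finite by auto
  show ?case
  proof (intro allI impI)
    fix T :: "('a \<Rightarrow> 'k::field) \<Rightarrow> ('b \<Rightarrow> 'k)" and U
    assume g: "good S E S' E' T U" and mn: "(\<Sum>x\<in>S. key (lead key S' (T (ev x)))) = n"
    define L where "L x = lead key S' (T (ev x))" for x
    have Lp: "L x \<in> S' \<and> T (ev x) (L x) \<noteq> 0 \<and> (\<forall>\<delta>\<in>S'. T (ev x) \<delta> \<noteq> 0 \<longrightarrow> key \<delta> \<le> key (L x))"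
      if xS: "x \<in> S" for x
    proof -
      obtain \<gamma>0 where "\<gamma>0 \<in> S'" "T (ev x) \<gamma>0 \<noteq> 0" using claimD[OF g sg sg' xS] by blast
      then show ?thesis unfolding L_def by (rule lead_prop[OF finS'])
    qed
    have Ldom: "domi E' \<delta> (L x)" if xS: "x \<in> S" and nz: "T (ev x) \<delta> \<noteq> 0" for x \<delta>
    proof -
      obtain \<gamma>0 where g0: "\<gamma>0 \<in> S'" "T (ev x) \<gamma>0 \<noteq> 0"
        and d0: "\<forall>\<delta>. T (ev x) \<delta> \<noteq> 0 \<longrightarrow> domi E' \<delta> \<gamma>0"
        using claimD[OF g sg sg' xS] by blast
      have LS: "L x \<in> S'" and Lnz: "T (ev x) (L x) \<noteq> 0" and Lmax: "key \<gamma>0 \<le> key (L x)"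
        using Lp[OF xS] g0 by auto
      have "domi E' (L x) \<gamma>0" using d0 Lnz by blast
      moreover have "domi E' \<gamma>0 (L x)"
      proof (rule ccontr)
        assume nd: "\<not> domi E' \<gamma>0 (L x)"
        have "key (L x) < key \<gamma>0"
          by (rule kcomp[rule_format, OF LS g0(1)]) (use nd \<open>domi E' (L x) \<gamma>0\<close> in blast)
        then show False using Lmax by simp
      qed
      moreover have "domi E' \<delta> \<gamma>0" using d0 nz by blast
      ultimately show ?thesis by (blast intro: domi_trans)
    qed
    show "\<exists>\<sigma>. inj_on \<sigma> S \<and> \<sigma> ` S \<subseteq> S' \<and> (\<forall>x\<in>S. \<forall>y\<in>S. x \<noteq> y \<and> {x,y} \<notin> E \<longrightarrow> {\<sigma> x, \<sigma> y} \<notin> E')"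
    proof (cases "inj_on L S")
      case True
      have "\<forall>x\<in>S. \<forall>y\<in>S. x \<noteq> y \<and> {x,y} \<notin> E \<longrightarrow> {L x, L y} \<notin> E'"
      proof (intro ballI impI, elim conjE)
        fix x y assume xS: "x \<in> S" and yS: "y \<in> S" and xy: "x \<noteq> y" and nE: "{x,y} \<notin> E"
        define v where "v = T (ev x)"
        define w where "w = T (ev y)"
        have Lne: "L x \<noteq> L y" using True xS yS xy unfolding inj_on_def by blast
        have eV: "(ev x :: 'a \<Rightarrow> 'k) \<in> Vs S" "(ev y :: 'a \<Rightarrow> 'k) \<in> Vs S"
          using xS yS by (auto intro: Vs_ev)
        have b0: "Bf E (ev x) (ev y) = (0 :: _ \<Rightarrow> 'k)" by (rule Bf_ev_zero[OF nE])
        have Bvw: "Bf E' v w = 0" unfolding v_def w_def by (rule iffD1[OF goodD(7)[OF g eV] b0])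
        show "{L x, L y} \<notin> E'"
        proof
          assume ed: "{L x, L y} \<in> E'"
          have "Bf E' v w (L x, L y) = 0" using Bvw by simp
          then have eq: "v (L x) * w (L y) = v (L y) * w (L x)" using ed by (simp add: Bf_def)
          have vx: "v (L x) \<noteq> 0" and wy: "w (L y) \<noteq> 0" unfolding v_def w_def using Lp xS yS by auto
          have LxS: "L x \<in> S'" and LyS: "L y \<in> S'" using Lp xS yS by auto
          have kne: "key (L x) \<noteq> key (L y)" using kinj LxS LyS Lne unfolding inj_on_def by blast
          show False
          proof (cases "key (L x) < key (L y)")
            case True
            have "v (L y) = 0"
            proof (rule ccontr)
              assume "v (L y) \<noteq> 0"
              then have "key (L y) \<le> key (L x)" using Lp[OF xS] LyS unfolding v_def by blast
              then show False using True by simp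
            qed
            then show False using eq vx wy by simp
          next
            case False
            then have kl: "key (L y) < key (L x)" using kne by simp
            have "w (L x) = 0"
            proof (rule ccontr)
              assume "w (L x) \<noteq> 0"
              then have "key (L x) \<le> key (L y)" using Lp[OF yS] LxS unfolding w_def by blast
              then show False using kl by simp
            qed
            then show False using eq vx wy by simp
          qed
        qed
      qed
      moreover have "L ` S \<subseteq> S'" using Lp by blast
      ultimately show ?thesis using True by blast
    next
      case False
      then obtain \<alpha> \<beta> where aS: "\<alpha> \<in> S" and bS: "\<beta> \<in> S" and ab: "\<alpha> \<noteq> \<beta>" and Leq: "L \<alpha> = L \<beta>"
        unfolding inj_on_def by blast
      define \<gamma> where "\<gamma> = L \<beta>"
      define v where "v = T (ev \<alpha>)"
      define w where "w = T (ev \<beta>)"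
      have gS: "\<gamma> \<in> S'" unfolding \<gamma>_def using Lp[OF bS] by blast
      have vg: "v \<gamma> \<noteq> 0" unfolding v_def \<gamma>_def using Lp[OF aS] Leq by simp
      have wg: "w \<gamma> \<noteq> 0" unfolding w_def \<gamma>_def using Lp[OF bS] by simp
      have dw: "\<forall>\<delta>. T (ev \<beta>) \<delta> \<noteq> 0 \<longrightarrow> domi E' \<delta> \<gamma>" unfolding \<gamma>_def using Ldom[OF bS] by blast
      have dm: "\<forall>x. {\<beta>,x} \<in> E \<and> x \<noteq> \<alpha> \<longrightarrow> {\<alpha>,x} \<in> E"
        by (rule twin[OF g sg aS bS ab _ dw]) (use vg v_def in simp)
      define c where "c = v \<gamma> / w \<gamma>"
      define T' where "T' = T \<circ> tau c \<alpha> \<beta>"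
      define U' where "U' = tau (-c) \<alpha> \<beta> \<circ> U"
      have g': "good S E S' E' T' U'" unfolding T'_def U'_def by (rule good_tau[OF g ab bS dm])
      have Tother: "T' (ev x) = T (ev x)" if "x \<noteq> \<alpha>" for x
      proof -
        have "tau c \<alpha> \<beta> (ev x) = ev x" using that by (auto simp: tau_def ev_apply fun_eq_iff)
        then show ?thesis unfolding T'_def by simp
      qed
      have "tau c \<alpha> \<beta> (ev \<alpha>) = ev \<alpha> - sc c (ev \<beta>)" using ab by (auto simp: tau_def ev_apply fun_eq_iff)
      then have Ta: "T' (ev \<alpha>) = v - sc c w" unfolding T'_def v_def w_def
        by (simp add: lin_diff[OF goodD(1)[OF g]] lin_sc[OF goodD(1)[OF g]])
      define v' where "v' = T' (ev \<alpha>)"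
      have v'g: "v' \<gamma> = 0" unfolding v'_def Ta c_def using wg by simp
      have "v' \<noteq> 0" unfolding v'_def by (rule good_T_ev_nonzero[OF g' aS])
      then obtain \<epsilon> where "v' \<epsilon> \<noteq> 0" by (auto simp: fun_eq_iff)
      moreover have "v' \<in> Vs S'" unfolding v'_def using goodD(3)[OF g'] .
      ultimately have eS: "\<epsilon> \<in> S'" unfolding Vs_def by blast
      define lam where "lam = lead key S' v'"
      have lp: "lam \<in> S'" "v' lam \<noteq> 0" unfolding lam_def using lead_prop[of S' \<epsilon> v' key, OF finS' eS \<open>v' \<epsilon> \<noteq> 0\<close>] by auto
      have "v lam \<noteq> 0 \<or> w lam \<noteq> 0"
      proof (rule ccontr)
        assume "\<not> (v lam \<noteq> 0 \<or> w lam \<noteq> 0)"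
        then have "v' lam = 0" unfolding v'_def Ta by simp
        then show False using lp by simp
      qed
      then have "key lam \<le> key \<gamma>"
        using Lp[OF aS] Lp[OF bS] lp(1) Leq unfolding v_def w_def \<gamma>_def by auto
      moreover have "lam \<noteq> \<gamma>" using lp(2) v'g by auto
      ultimately have klt: "key lam < key \<gamma>" using kinj lp(1) gS unfolding inj_on_def by fastforce
      have "(\<Sum>x\<in>S. key (lead key S' (T' (ev x)))) = key lam + (\<Sum>x\<in>S - {\<alpha>}. key (lead key S' (T' (ev x))))"
        unfolding lam_def v'_def by (rule sum.remove[OF finS aS])
      also have "(\<Sum>x\<in>S - {\<alpha>}. key (lead key S' (T' (ev x)))) = (\<Sum>x\<in>S - {\<alpha>}. key (L x))"
        unfolding L_def by (rule sum.cong) (auto simp: Tother)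
      also have "key lam + (\<Sum>x\<in>S - {\<alpha>}. key (L x)) < key (L \<alpha>) + (\<Sum>x\<in>S - {\<alpha>}. key (L x))"
        using klt Leq unfolding \<gamma>_def by simp
      also have "key (L \<alpha>) + (\<Sum>x\<in>S - {\<alpha>}. key (L x)) = n"
        using mn sum.remove[OF finS aS, of "\<lambda>x. key (L x)"] unfolding L_def by simp
      finally have "(\<Sum>x\<in>S. key (lead key S' (T' (ev x)))) < n" .
      then show ?thesis using less.IH g' by blast
    qed
  qed
qed



lemma key_exists:
  assumes sg': "simple_graph S' E'"
  shows "\<exists>key :: 'b \<Rightarrow> nat. inj_on key S' \<and>
     (\<forall>\<delta>\<in>S'. \<forall>\<gamma>\<in>S'. domi E' \<delta> \<gamma> \<and> \<not> domi E' \<gamma> \<delta> \<longrightarrow> key \<delta> < key \<gamma>)"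
proof -
  have finS': "finite S'" using sg' sg_finite by blast
  obtain num where num: "bij_betw num S' {0..<card S'}" using ex_bij_betw_finite_nat[OF finS'] by blast
  define N where "N = card S'"
  define h where "h \<gamma> = card {\<delta>\<in>S'. domi E' \<delta> \<gamma>}" for \<gamma>
  define key where "key \<gamma> = h \<gamma> * N + num \<gamma>" for \<gamma>
  have numlt: "num \<gamma> < N" if "\<gamma> \<in> S'" for \<gamma>
    using num that unfolding bij_betw_def N_def by auto
  have hlt: "key \<delta> < key \<gamma>" if "h \<delta> < h \<gamma>" "\<delta> \<in> S'" for \<delta> \<gamma>
  proof -
    have "key \<delta> < h \<delta> * N + N" unfolding key_def using numlt[OF that(2)] by simp
    also have "\<dots> = Suc (h \<delta>) * N" by simp
    also have "\<dots> \<le> h \<gamma> * N" using that(1) by (intro mult_right_mono) auto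
    also have "\<dots> \<le> key \<gamma>" unfolding key_def by simp
    finally show ?thesis .
  qed
  have "inj_on key S'"
  proof (rule inj_onI)
    fix x y assume xS: "x \<in> S'" and yS: "y \<in> S'" and kxy: "key x = key y"
    have "h x = h y"
    proof (rule ccontr)
      assume "h x \<noteq> h y"
      then have "h x < h y \<or> h y < h x" by arith
      then show False using hlt xS yS kxy by fastforce
    qed
    then have "num x = num y" using kxy unfolding key_def by simp
    then show "x = y" using num xS yS unfolding bij_betw_def inj_on_def by blast
  qed
  moreover have "key \<delta> < key \<gamma>" if dS: "\<delta> \<in> S'" and gS: "\<gamma> \<in> S'"
    and d1: "domi E' \<delta> \<gamma>" and d2: "\<not> domi E' \<gamma> \<delta>" for \<delta> \<gamma>
  proof -
    have "{\<epsilon>\<in>S'. domi E' \<epsilon> \<delta>} \<subset> {\<epsilon>\<in>S'. domi E' \<epsilon> \<gamma>}"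
    proof
      show "{\<epsilon>\<in>S'. domi E' \<epsilon> \<delta>} \<subseteq> {\<epsilon>\<in>S'. domi E' \<epsilon> \<gamma>}" using d1 by (auto intro: domi_trans)
      have "\<gamma> \<in> {\<epsilon>\<in>S'. domi E' \<epsilon> \<gamma>}" using gS domi_refl by auto
      moreover have "\<gamma> \<notin> {\<epsilon>\<in>S'. domi E' \<epsilon> \<delta>}" using d2 by auto
      ultimately show "{\<epsilon>\<in>S'. domi E' \<epsilon> \<delta>} \<noteq> {\<epsilon>\<in>S'. domi E' \<epsilon> \<gamma>}" by blast
    qed
    then have "h \<delta> < h \<gamma>" unfolding h_def by (rule psubset_card_mono[rotated]) (simp add: finS')
    then show ?thesis using hlt dS by blast
  qed
  ultimately show ?thesis by blast
qed

lemma mainfinal: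
  fixes T :: "('a \<Rightarrow> 'k::field) \<Rightarrow> ('b \<Rightarrow> 'k)"
  assumes g: "good S E S' E' T U" and sg: "simple_graph S E" and sg': "simple_graph S' E'"
  shows "\<exists>\<sigma>. inj_on \<sigma> S \<and> \<sigma> ` S \<subseteq> S' \<and> (\<forall>x\<in>S. \<forall>y\<in>S. x \<noteq> y \<and> {x,y} \<notin> E \<longrightarrow> {\<sigma> x, \<sigma> y} \<notin> E')"
proof -
  obtain key :: "'b \<Rightarrow> nat" where k1: "inj_on key S'"
    and k2: "\<forall>\<delta>\<in>S'. \<forall>\<gamma>\<in>S'. domi E' \<delta> \<gamma> \<and> \<not> domi E' \<gamma> \<delta> \<longrightarrow> key \<delta> < key \<gamma>"
    using key_exists[OF sg'] by blast
  show ?thesis using mainind[OF sg sg' k1 k2] g by blast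
qed



definition nhom :: "'a set \<Rightarrow> 'a set set \<Rightarrow> 'b set \<Rightarrow> 'b set set
    \<Rightarrow> (('a, 'k::field) nla \<Rightarrow> ('b, 'k) nla) \<Rightarrow> bool" where
  "nhom S E S' E' h \<longleftrightarrow> (\<forall>p\<in>nla_carrier S E. h p \<in> nla_carrier S' E') \<and>
     (\<forall>p\<in>nla_carrier S E. \<forall>q\<in>nla_carrier S E. h (nla_add p q) = nla_add (h p) (h q)) \<and>
     (\<forall>c. \<forall>p\<in>nla_carrier S E. h (nla_smul c p) = nla_smul c (h p)) \<and>
     (\<forall>p\<in>nla_carrier S E. \<forall>q\<in>nla_carrier S E.
        h (nla_bracket E p q) = nla_bracket E' (h p) (h q))"

lemma carrier_iff: "(u, w) \<in> nla_carrier S E \<longleftrightarrow> (\<forall>x. x \<notin> S \<longrightarrow> u x = 0) \<and>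
      (\<forall>x y. w (x, y) = - w (y, x)) \<and> (\<forall>x y. {x, y} \<notin> E \<longrightarrow> w (x, y) = 0)"
  by (simp add: nla_carrier_def)

lemma carrier_add:
  assumes "p \<in> nla_carrier S E" "q \<in> nla_carrier S E" shows "nla_add p q \<in> nla_carrier S E"
proof -
  obtain a b where p: "p = (a,b)" by (cases p)
  obtain c d where q: "q = (c,d)" by (cases q)
  have A: "\<forall>x. x \<notin> S \<longrightarrow> a x = 0" "\<forall>x y. b (x,y) = - b (y,x)" "\<forall>x y. {x,y} \<notin> E \<longrightarrow> b (x,y) = 0"
    using assms(1) unfolding p carrier_iff by blast+
  have B: "\<forall>x. x \<notin> S \<longrightarrow> c x = 0" "\<forall>x y. d (x,y) = - d (y,x)" "\<forall>x y. {x,y} \<notin> E \<longrightarrow> d (x,y) = 0"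
    using assms(2) unfolding q carrier_iff by blast+
  have sk: "b (x,y) + d (x,y) = - (b (y,x) + d (y,x))" for x y
    using A(2)[rule_format, of x y] B(2)[rule_format, of x y] by simp
  show ?thesis unfolding p q nla_add_def carrier_iff fst_conv snd_conv
  proof (intro conjI allI impI)
    fix x assume "x \<notin> S" then show "a x + c x = 0" using A(1) B(1) by simp
  next
    fix x y show "b (x,y) + d (x,y) = - (b (y,x) + d (y,x))" by (rule sk)
  next
    fix x y assume "{x,y} \<notin> E" then show "b (x,y) + d (x,y) = 0" using A(3) B(3) by simp
  qed
qed

lemma carrier_smul:
  assumes "p \<in> nla_carrier S E" shows "nla_smul c p \<in> nla_carrier S E"
proof -
  obtain a b where p: "p = (a,b)" by (cases p)
  have A: "\<forall>x. x \<notin> S \<longrightarrow> a x = 0" "\<forall>x y. b (x,y) = - b (y,x)" "\<forall>x y. {x,y} \<notin> E \<longrightarrow> b (x,y) = 0"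
    using assms(1) unfolding p carrier_iff by blast+
  have sk: "c * b (x,y) = - (c * b (y,x))" for x y
    using A(2)[rule_format, of x y] by simp
  show ?thesis unfolding p nla_smul_def carrier_iff fst_conv snd_conv
  proof (intro conjI allI impI)
    fix x assume "x \<notin> S" then show "c * a x = 0" using A(1) by simp
  next
    fix x y show "c * b (x,y) = - (c * b (y,x))" by (rule sk)
  next
    fix x y assume "{x,y} \<notin> E" then show "c * b (x,y) = 0" using A(3) by simp
  qed
qed

lemma carrier_bracket: "nla_bracket E p q \<in> nla_carrier S E"
  by (auto simp: nla_carrier_def nla_bracket_def insert_commute)

lemma carrier_V: "(u, \<lambda>_. 0) \<in> nla_carrier S E \<longleftrightarrow> u \<in> Vs S"
  by (auto simp: nla_carrier_def Vs_def)

lemma nhom_inv: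
  fixes f :: "('a, 'k::field) nla \<Rightarrow> ('b, 'k) nla"
  assumes h: "nhom S E S' E' f" and b: "bij_betw f (nla_carrier S E) (nla_carrier S' E')"
  shows "nhom S' E' S E (inv_into (nla_carrier S E) f)"
proof -
  let ?C = "nla_carrier S E" and ?C' = "nla_carrier S' E'"
  let ?g = "inv_into ?C f"
  have gC: "?g a \<in> ?C" if "a \<in> ?C'" for a using b that by (metis bij_betw_imp_surj_on inv_into_into)
  have fg: "f (?g a) = a" if "a \<in> ?C'" for a using b that by (metis bij_betw_inv_into_right)
  have gf: "?g (f p) = p" if "p \<in> ?C" for p using b that by (metis bij_betw_inv_into_left)
  have inj: "p = q" if "p \<in> ?C" "q \<in> ?C" "f p = f q" for p q using that gf by metis
  have hD: "\<And>p q. p \<in> ?C \<Longrightarrow> q \<in> ?C \<Longrightarrow> f (nla_add p q) = nla_add (f p) (f q)"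
    "\<And>c p. p \<in> ?C \<Longrightarrow> f (nla_smul c p) = nla_smul c (f p)"
    "\<And>p q. p \<in> ?C \<Longrightarrow> q \<in> ?C \<Longrightarrow> f (nla_bracket E p q) = nla_bracket E' (f p) (f q)"
    using h unfolding nhom_def by auto
  show ?thesis unfolding nhom_def
  proof (intro conjI ballI allI)
    fix a :: "('b, 'k) nla" assume "a \<in> ?C'" then show "?g a \<in> ?C" by (rule gC)
  next
    fix a b :: "('b, 'k) nla" assume a: "a \<in> ?C'" and bb: "b \<in> ?C'"
    have "f (nla_add (?g a) (?g b)) = nla_add a b" using hD(1)[OF gC[OF a] gC[OF bb]] fg a bb by simp
    then have "?g (nla_add a b) = ?g (f (nla_add (?g a) (?g b)))" by simp
    also have "\<dots> = nla_add (?g a) (?g b)" by (rule gf[OF carrier_add[OF gC[OF a] gC[OF bb]]])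
    finally show "?g (nla_add a b) = nla_add (?g a) (?g b)" .
  next
    fix c :: 'k and a :: "('b, 'k) nla" assume a: "a \<in> ?C'"
    have "f (nla_smul c (?g a)) = nla_smul c a" using hD(2)[OF gC[OF a]] fg a by simp
    then have "?g (nla_smul c a) = ?g (f (nla_smul c (?g a)))" by simp
    also have "\<dots> = nla_smul c (?g a)" by (rule gf[OF carrier_smul[OF gC[OF a]]])
    finally show "?g (nla_smul c a) = nla_smul c (?g a)" .
  next
    fix a b :: "('b, 'k) nla" assume a: "a \<in> ?C'" and bb: "b \<in> ?C'"
    have "f (nla_bracket E (?g a) (?g b)) = nla_bracket E' a b" using hD(3)[OF gC[OF a] gC[OF bb]] fg a bb by simp
    then have "?g (nla_bracket E' a b) = ?g (f (nla_bracket E (?g a) (?g b)))" by simp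
    also have "\<dots> = nla_bracket E (?g a) (?g b)" by (rule gf[OF carrier_bracket])
    finally show "?g (nla_bracket E' a b) = nla_bracket E (?g a) (?g b)" .
  qed
qed

lemma lemmaZ:
  fixes h :: "('a, 'k::field) nla \<Rightarrow> ('b, 'k) nla"
  assumes h: "nhom S E S' E' h" and sg: "simple_graph S E"
    and w: "(\<lambda>_. 0, w) \<in> nla_carrier S E"
  shows "fst (h (\<lambda>_. 0, w)) = (\<lambda>_. 0)"
proof -
  let ?C = "nla_carrier S E"
  have hD: "\<And>p. p \<in> ?C \<Longrightarrow> h p \<in> nla_carrier S' E'"
    "\<And>p q. p \<in> ?C \<Longrightarrow> q \<in> ?C \<Longrightarrow> h (nla_add p q) = nla_add (h p) (h q)"
    "\<And>c p. p \<in> ?C \<Longrightarrow> h (nla_smul c p) = nla_smul c (h p)"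
    "\<And>p q. p \<in> ?C \<Longrightarrow> q \<in> ?C \<Longrightarrow> h (nla_bracket E p q) = nla_bracket E' (h p) (h q)"
    using h unfolding nhom_def by auto
  have wskew: "w (x,y) = - w (y,x)" for x y using w unfolding carrier_iff by blast
  have woff: "{x,y} \<notin> E \<Longrightarrow> w (x,y) = 0" for x y using w unfolding carrier_iff by blast
  define wF where "wF F = (\<lambda>(x,y). if {x,y} \<in> F then w (x,y) else 0)" for F
  have wFC: "(\<lambda>_. 0, wF F) \<in> ?C" if FE: "F \<subseteq> E" for F
    unfolding carrier_iff
  proof (intro conjI allI impI)
    fix x y
    show "wF F (x, y) = - wF F (y, x)"
      using wskew[of x y] unfolding wF_def by (simp add: insert_commute)
  next
    fix x y assume "{x,y} \<notin> E"
    then show "wF F (x,y) = 0" using FE unfolding wF_def by auto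
  qed simp
  have finE: "finite E"
  proof -
    have "E \<subseteq> Pow S"
    proof
      fix e assume "e \<in> E"
      then obtain x y where "x \<in> S" "y \<in> S" "e = {x,y}" using sg unfolding simple_graph_def by blast
      then show "e \<in> Pow S" by simp
    qed
    then show ?thesis using sg_finite[OF sg] finite_subset by blast
  qed
  have piece: "fst (h (\<lambda>_. 0, wF {e})) = (\<lambda>_. 0)" if eE: "e \<in> E" for e
  proof -
    obtain a b where ab: "a \<in> S" "b \<in> S" "a \<noteq> b" "e = {a,b}"
      using sg eE unfolding simple_graph_def by blast
    define pa where "pa = ((ev a :: 'a \<Rightarrow> 'k), (\<lambda>_. 0) :: 'a \<times> 'a \<Rightarrow> 'k)"
    define pb where "pb = ((ev b :: 'a \<Rightarrow> 'k), (\<lambda>_. 0) :: 'a \<times> 'a \<Rightarrow> 'k)"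
    have paC: "pa \<in> ?C" "pb \<in> ?C" unfolding pa_def pb_def using ab
      by (auto simp: nla_carrier_def ev_apply)
    have eq: "(\<lambda>_. 0, wF {e}) = nla_smul (w (a,b)) (nla_bracket E pa pb)"
    proof -
      have "wF {e} (x,y) = w (a,b) * (if {x,y} \<in> E then ev a x * ev b y - ev a y * ev b x else 0)" for x y
      proof (cases "{x,y} = {a,b}")
        case True
        then have "{x,y} \<in> E" using eE ab by simp
        moreover have "(x = a \<and> y = b) \<or> (x = b \<and> y = a)" using True by (auto simp: doubleton_eq_iff)
        ultimately show ?thesis
        proof (elim disjE conjE)
          assume xa: "x = a" and yb: "y = b"
          have "{a,b} \<in> {e}" using ab(4) by simp
          then show ?thesis using ab(3) eE ab(4) unfolding wF_def xa yb by (simp add: ev_apply)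
        next
          assume xb: "x = b" and ya: "y = a"
          have "{b,a} \<in> {e}" using ab(4) by (simp add: insert_commute)
          moreover have "{b,a} \<in> E" using eE ab(4) by (simp add: insert_commute)
          ultimately show ?thesis using ab(3) wskew[of b a] unfolding wF_def xb ya by (simp add: ev_apply)
        qed
      next
        case False
        then have "\<not> (x = a \<and> y = b)" "\<not> (x = b \<and> y = a)" by (auto simp: insert_commute)
        have "{x,y} \<notin> {e}" using False ab(4) by simp
        then show ?thesis using \<open>\<not> (x = a \<and> y = b)\<close> \<open>\<not> (x = b \<and> y = a)\<close>
          unfolding wF_def by (auto simp: ev_apply)
      qed
      then show ?thesis
        by (simp add: nla_smul_def nla_bracket_def pa_def pb_def fun_eq_iff split: prod.split)
    qed
    have "h (\<lambda>_. 0, wF {e}) = nla_smul (w (a,b)) (nla_bracket E' (h pa) (h pb))"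
      unfolding eq by (simp add: hD(3)[OF carrier_bracket] hD(4)[OF paC])
    then show ?thesis by (simp add: nla_smul_def nla_bracket_def)
  qed
  have "F \<subseteq> E \<Longrightarrow> fst (h (\<lambda>_. 0, wF F)) = (\<lambda>_. 0)" for F
  proof (induction F rule: infinite_finite_induct)
    case (infinite F) then show ?case using finE finite_subset by blast
  next
    case empty
    let ?X = "((\<lambda>_. 0, wF {}) :: ('a, 'k) nla)"
    have e0: "?X = nla_smul 0 ?X" by (simp add: nla_smul_def wF_def fun_eq_iff)
    have "h ?X = h (nla_smul 0 ?X)" using e0 by (rule arg_cong)
    also have "\<dots> = nla_smul 0 (h ?X)" by (rule hD(3)[OF wFC]) simp
    finally have "h ?X = nla_smul 0 (h ?X)" .
    then have "fst (h ?X) = fst (nla_smul 0 (h ?X))" by (rule arg_cong)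
    then show ?case by (simp add: nla_smul_def fun_eq_iff)
  next
    case (insert e F)
    have FE: "F \<subseteq> E" and eE: "e \<in> E" using insert.prems by auto
    have split: "(\<lambda>_. 0, wF (insert e F)) = nla_add (\<lambda>_. 0, wF F) (\<lambda>_. 0, wF {e})"
      using insert.hyps(2) by (auto simp: nla_add_def wF_def fun_eq_iff)
    have "fst (h (\<lambda>_. 0, wF (insert e F))) = fst (nla_add (h (\<lambda>_. 0, wF F)) (h (\<lambda>_. 0, wF {e})))"
      unfolding split using hD(2)[OF wFC[OF FE] wFC[of "{e}"]] eE by simp
    also have "\<dots> = (\<lambda>_. 0)" using insert.IH[OF FE] piece[OF eE] by (simp add: nla_add_def)
    finally show ?case .
  qed
  moreover have "wF E = w" unfolding wF_def using woff by (auto simp: fun_eq_iff)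
  ultimately show ?thesis by (metis order_refl)
qed



definition restr :: "'x set \<Rightarrow> ('x \<Rightarrow> 'k::field) \<Rightarrow> ('x \<Rightarrow> 'k)" where
  "restr S u = (\<lambda>x. if x \<in> S then u x else 0)"

lemma restr_Vs: "restr S u \<in> Vs S" by (simp add: restr_def Vs_def)
lemma restr_id: "u \<in> Vs S \<Longrightarrow> restr S u = u" by (auto simp: restr_def Vs_def fun_eq_iff)

definition extr :: "'a set \<Rightarrow> (('a, 'k::field) nla \<Rightarrow> ('b, 'k) nla) \<Rightarrow> ('a \<Rightarrow> 'k) \<Rightarrow> ('b \<Rightarrow> 'k)" where
  "extr S h u = fst (h (restr S u, \<lambda>_. 0))"

lemma nhomD:
  assumes "nhom S E S' E' h"
  shows "\<And>p. p \<in> nla_carrier S E \<Longrightarrow> h p \<in> nla_carrier S' E'"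
    "\<And>p q. p \<in> nla_carrier S E \<Longrightarrow> q \<in> nla_carrier S E \<Longrightarrow> h (nla_add p q) = nla_add (h p) (h q)"
    "\<And>c p. p \<in> nla_carrier S E \<Longrightarrow> h (nla_smul c p) = nla_smul c (h p)"
    "\<And>p q. p \<in> nla_carrier S E \<Longrightarrow> q \<in> nla_carrier S E \<Longrightarrow> h (nla_bracket E p q) = nla_bracket E' (h p) (h q)"
  using assms unfolding nhom_def by auto

lemma restrC: "(restr S u, \<lambda>_. 0) \<in> nla_carrier S E"
  using carrier_V[of "restr S u" S E] restr_Vs by blast

lemma extr_lin:
  fixes h :: "('a, 'k::field) nla \<Rightarrow> ('b, 'k) nla"
  assumes h: "nhom S E S' E' h" shows "lin (extr S h)"
  unfolding lin_def
proof (intro conjI allI)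
  fix x y :: "'a \<Rightarrow> 'k"
  have e: "(restr S (x + y), \<lambda>_. 0) = nla_add (restr S x, \<lambda>_. 0) (restr S y, \<lambda>_. 0)"
    by (simp add: nla_add_def restr_def fun_eq_iff)
  show "extr S h (x + y) = extr S h x + extr S h y"
    unfolding extr_def e nhomD(2)[OF h restrC restrC] by (simp add: nla_add_def plus_fun_def)
next
  fix c and x :: "'a \<Rightarrow> 'k"
  have e: "(restr S (sc c x), \<lambda>_. 0) = nla_smul c (restr S x, \<lambda>_. 0)"
    by (simp add: nla_smul_def restr_def fun_eq_iff)
  show "extr S h (sc c x) = sc c (extr S h x)"
    unfolding extr_def e nhomD(3)[OF h restrC] by (simp add: nla_smul_def sc_def)
qed

lemma extr_Vs:
  fixes h :: "('a, 'k::field) nla \<Rightarrow> ('b, 'k) nla"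
  assumes h: "nhom S E S' E' h" shows "extr S h u \<in> Vs S'"
proof -
  obtain a b where ab: "h (restr S u, \<lambda>_. 0) = (a, b)" by (cases "h (restr S u, \<lambda>_. 0)")
  have "h (restr S u, \<lambda>_. 0) \<in> nla_carrier S' E'" by (rule nhomD(1)[OF h restrC])
  then have "(a,b) \<in> nla_carrier S' E'" using ab by simp
  then have "a \<in> Vs S'" unfolding carrier_iff Vs_def by blast
  then show ?thesis unfolding extr_def ab by simp
qed

lemma extr_inv:
  fixes f :: "('a, 'k::field) nla \<Rightarrow> ('b, 'k) nla"
  assumes f: "nhom S E S' E' f" and g: "nhom S' E' S E g"
    and gf: "\<forall>p\<in>nla_carrier S E. g (f p) = p" and sg': "simple_graph S' E'"
    and uV: "u \<in> Vs S"
  shows "extr S' g (extr S f u) = u"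
proof -
  have uC: "(u, \<lambda>_. 0) \<in> nla_carrier S E" using carrier_V uV by blast
  obtain a b where ab: "f (u, \<lambda>_. 0) = (a, b)" by (cases "f (u, \<lambda>_. 0)")
  have pC: "(a,b) \<in> nla_carrier S' E'" using nhomD(1)[OF f uC] ab by simp
  have aV: "a \<in> Vs S'" using pC unfolding carrier_iff Vs_def by blast
  have aC: "(a, \<lambda>_. 0) \<in> nla_carrier S' E'" using carrier_V aV by blast
  have bC: "(\<lambda>_. 0, b) \<in> nla_carrier S' E'" using pC unfolding carrier_iff by blast
  have Tu: "extr S f u = a" unfolding extr_def restr_id[OF uV] ab by simp
  have split: "(a,b) = nla_add (a, \<lambda>_. 0) (\<lambda>_. 0, b)" by (simp add: nla_add_def)
  have "(u, \<lambda>_. 0) = g (a,b)" using gf uC ab by metis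
  also have "\<dots> = nla_add (g (a, \<lambda>_. 0)) (g (\<lambda>_. 0, b))" by (subst split) (rule nhomD(2)[OF g aC bC])
  finally have "u = fst (nla_add (g (a, \<lambda>_. 0)) (g (\<lambda>_. 0, b)))" by (metis fst_conv)
  also have "\<dots> = fst (g (a, \<lambda>_. 0))" using lemmaZ[OF g sg' bC] by (simp add: nla_add_def)
  finally have U: "u = fst (g (a, \<lambda>_. 0))" .
  have "extr S' g (extr S f u) = extr S' g a" by (simp only: Tu)
  also have "\<dots> = fst (g (a, \<lambda>_. 0))" unfolding extr_def restr_id[OF aV] ..
  finally show ?thesis using U by simp
qed

lemma extr_Bf:
  fixes f :: "('a, 'k::field) nla \<Rightarrow> ('b, 'k) nla"
  assumes f: "nhom S E S' E' f" and inj: "inj_on f (nla_carrier S E)"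
    and uV: "u \<in> Vs S" and uV': "u' \<in> Vs S"
  shows "Bf E u u' = 0 \<longleftrightarrow> Bf E' (extr S f u) (extr S f u') = 0"
proof -
  let ?C = "nla_carrier S E"
  have uC: "(u, \<lambda>_. 0) \<in> ?C" "(u', \<lambda>_. 0) \<in> ?C" using carrier_V uV uV' by blast+
  define Z where "Z = ((\<lambda>_. 0, \<lambda>_. 0) :: ('a, 'k) nla)"
  have ZC: "Z \<in> ?C" unfolding Z_def carrier_iff by simp
  have Z0: "nla_smul 0 p = ((\<lambda>_. 0, \<lambda>_. 0) :: ('b, 'k) nla)" for p :: "('b, 'k) nla"
    by (simp add: nla_smul_def)
  have "f Z = f (nla_smul 0 Z)" by (simp add: Z_def nla_smul_def)
  also have "\<dots> = nla_smul 0 (f Z)" by (rule nhomD(3)[OF f ZC])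
  finally have fZ: "f Z = (\<lambda>_. 0, \<lambda>_. 0)" using Z0 by simp
  have br: "nla_bracket E (u, \<lambda>_. 0) (u', \<lambda>_. 0) = (\<lambda>_. 0, Bf E u u')"
    by (simp add: nla_bracket_def Bf_def fun_eq_iff split: prod.split)
  have fbr: "f (nla_bracket E (u, \<lambda>_. 0) (u', \<lambda>_. 0)) = (\<lambda>_. 0, Bf E' (extr S f u) (extr S f u'))"
    unfolding nhomD(4)[OF f uC] extr_def restr_id[OF uV] restr_id[OF uV']
    by (simp add: nla_bracket_def Bf_def fun_eq_iff split: prod.split)
  show ?thesis
  proof
    assume "Bf E u u' = 0"
    then have "nla_bracket E (u, \<lambda>_. 0) (u', \<lambda>_. 0) = Z" unfolding br Z_def by simp
    then have "f (nla_bracket E (u, \<lambda>_. 0) (u', \<lambda>_. 0)) = (\<lambda>_. 0, \<lambda>_. 0)" using fZ by simp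
    then show "Bf E' (extr S f u) (extr S f u') = 0" unfolding fbr by simp
  next
    assume "Bf E' (extr S f u) (extr S f u') = 0"
    then have "f (nla_bracket E (u, \<lambda>_. 0) (u', \<lambda>_. 0)) = f Z" unfolding fbr fZ by simp
    then have "nla_bracket E (u, \<lambda>_. 0) (u', \<lambda>_. 0) = Z"
      using inj carrier_bracket ZC unfolding inj_on_def by blast
    then show "Bf E u u' = 0" unfolding br Z_def by simp
  qed
qed



lemma final_comb:
  assumes sg: "simple_graph S E" and sg': "simple_graph S' E'"
    and s1: "inj_on \<sigma> S" and s2: "\<sigma> ` S \<subseteq> S'"
    and s3: "\<forall>x\<in>S. \<forall>y\<in>S. x \<noteq> y \<and> {x,y} \<notin> E \<longrightarrow> {\<sigma> x, \<sigma> y} \<notin> E'"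
    and r1: "inj_on \<rho> S'" and r2: "\<rho> ` S' \<subseteq> S"
    and r3: "\<forall>x\<in>S'. \<forall>y\<in>S'. x \<noteq> y \<and> {x,y} \<notin> E' \<longrightarrow> {\<rho> x, \<rho> y} \<notin> E"
  shows "graph_iso S E S' E'"
proof -
  have finS: "finite S" and finS': "finite S'" using sg sg' sg_finite by auto
  have c1: "card S \<le> card S'" using card_inj_on_le[OF s1 s2 finS'] .
  have c2: "card S' \<le> card S" using card_inj_on_le[OF r1 r2 finS] .
  have img: "\<sigma> ` S = S'"
    using card_subset_eq[OF finS' s2] card_image[OF s1] c1 c2 by simp
  have bij: "bij_betw \<sigma> S S'" using s1 img unfolding bij_betw_def by simp
  define NE where "NE = {e. \<exists>x y. x \<in> S \<and> y \<in> S \<and> x \<noteq> y \<and> {x,y} \<notin> E \<and> e = {x,y}}"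
  define NE' where "NE' = {e. \<exists>x y. x \<in> S' \<and> y \<in> S' \<and> x \<noteq> y \<and> {x,y} \<notin> E' \<and> e = {x,y}}"
  have NEP: "NE \<subseteq> Pow S" unfolding NE_def by auto
  have NEP': "NE' \<subseteq> Pow S'" unfolding NE'_def by auto
  have finNE: "finite NE" using NEP finS finite_subset by blast
  have finNE': "finite NE'" using NEP' finS' finite_subset by blast
  have injs: "inj_on (image \<sigma>) NE" using inj_on_image_Pow[OF s1] NEP inj_on_subset by blast
  have injr: "inj_on (image \<rho>) NE'" using inj_on_image_Pow[OF r1] NEP' inj_on_subset by blast
  have ms: "image \<sigma> ` NE \<subseteq> NE'"
  proof
    fix e assume "e \<in> image \<sigma> ` NE"
    then obtain x y where xy: "x \<in> S" "y \<in> S" "x \<noteq> y" "{x,y} \<notin> E" and e: "e = \<sigma> ` {x,y}"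
      unfolding NE_def by blast
    have "\<sigma> x \<noteq> \<sigma> y" using s1 xy unfolding inj_on_def by blast
    moreover have "{\<sigma> x, \<sigma> y} \<notin> E'" using s3 xy by blast
    moreover have "\<sigma> x \<in> S'" "\<sigma> y \<in> S'" using s2 xy by auto
    ultimately show "e \<in> NE'" unfolding NE'_def e by auto
  qed
  have mr: "image \<rho> ` NE' \<subseteq> NE"
  proof
    fix e assume "e \<in> image \<rho> ` NE'"
    then obtain x y where xy: "x \<in> S'" "y \<in> S'" "x \<noteq> y" "{x,y} \<notin> E'" and e: "e = \<rho> ` {x,y}"
      unfolding NE'_def by blast
    have "\<rho> x \<noteq> \<rho> y" using r1 xy unfolding inj_on_def by blast
    moreover have "{\<rho> x, \<rho> y} \<notin> E" using r3 xy by blast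
    moreover have "\<rho> x \<in> S" "\<rho> y \<in> S" using r2 xy by auto
    ultimately show "e \<in> NE" unfolding NE_def e by auto
  qed
  have d1: "card NE \<le> card NE'" using card_inj_on_le[OF injs ms finNE'] .
  have d2: "card NE' \<le> card NE" using card_inj_on_le[OF injr mr finNE] .
  have imgNE: "image \<sigma> ` NE = NE'"
    using card_subset_eq[OF finNE' ms] card_image[OF injs] d1 d2 by simp
  have "\<forall>x\<in>S. \<forall>y\<in>S. {x, y} \<in> E \<longleftrightarrow> {\<sigma> x, \<sigma> y} \<in> E'"
  proof (intro ballI)
    fix x y assume xS: "x \<in> S" and yS: "y \<in> S"
    show "{x, y} \<in> E \<longleftrightarrow> {\<sigma> x, \<sigma> y} \<in> E'"
    proof (cases "x = y")
      case True
      then show ?thesis using sg_no_loop[OF sg] sg_no_loop[OF sg'] by simp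
    next
      case xy: False
      show ?thesis
      proof
        assume xyE: "{x,y} \<in> E"
        show "{\<sigma> x, \<sigma> y} \<in> E'"
        proof (rule ccontr)
          assume n: "{\<sigma> x, \<sigma> y} \<notin> E'"
          have "\<sigma> x \<noteq> \<sigma> y" using s1 xS yS xy unfolding inj_on_def by blast
          moreover have "\<sigma> x \<in> S'" "\<sigma> y \<in> S'" using s2 xS yS by auto
          ultimately have "{\<sigma> x, \<sigma> y} \<in> NE'" using n unfolding NE'_def by blast
          then obtain e where eN: "e \<in> NE" and ee: "\<sigma> ` e = {\<sigma> x, \<sigma> y}" using imgNE by force
          have "\<sigma> ` e = \<sigma> ` {x,y}" using ee by simp
          moreover have "e \<in> Pow S" "{x,y} \<in> Pow S" using eN NEP xS yS by auto
          ultimately have "e = {x,y}" using inj_on_image_Pow[OF s1] unfolding inj_on_def by blast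
          then have "{x,y} \<notin> E" using eN unfolding NE_def by auto
          then show False using xyE by simp
        qed
      next
        assume "{\<sigma> x, \<sigma> y} \<in> E'"
        then show "{x,y} \<in> E" using s3 xS yS xy by blast
      qed
    qed
  qed
  then show ?thesis unfolding graph_iso_def using bij by blast
qed

theorem theorem1p1:
  fixes S :: "'a set" and E :: "'a set set" and S' :: "'b set" and E' :: "'b set set"
    and f :: "('a, 'k::field) nla \<Rightarrow> ('b, 'k) nla"
  assumes "(2::'k) \<noteq> 0"
    and "simple_graph S E" and "simple_graph S' E'"
    and "nla_iso S E S' E' f"
  shows "graph_iso S E S' E'"
proof -
  note sg = assms(2) and sg' = assms(3)
  let ?C = "nla_carrier S E" and ?C' = "nla_carrier S' E'"
  have b: "bij_betw f ?C ?C'" using assms(4) unfolding nla_iso_def by blast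
  have hf: "nhom S E S' E' f" using assms(4) b unfolding nla_iso_def nhom_def bij_betw_def by blast
  define g where "g = inv_into ?C f"
  have hg: "nhom S' E' S E g" unfolding g_def by (rule nhom_inv[OF hf b])
  have gf: "\<forall>p\<in>?C. g (f p) = p" unfolding g_def using b by (metis bij_betw_inv_into_left)
  have fg: "\<forall>p\<in>?C'. f (g p) = p" unfolding g_def using b by (metis bij_betw_inv_into_right)
  have injf: "inj_on f ?C" using b unfolding bij_betw_def by blast
  define T where "T = extr S f"
  define U where "U = extr S' g"
  have good: "good S E S' E' T U"
    unfolding good_def
  proof (intro conjI allI ballI)
    show "lin T" unfolding T_def by (rule extr_lin[OF hf])
    show "lin U" unfolding U_def by (rule extr_lin[OF hg])
    fix u :: "'a \<Rightarrow> 'k" show "T u \<in> Vs S'" unfolding T_def by (rule extr_Vs[OF hf])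
  next
    fix u :: "'b \<Rightarrow> 'k" show "U u \<in> Vs S" unfolding U_def by (rule extr_Vs[OF hg])
  next
    fix u :: "'a \<Rightarrow> 'k" assume "u \<in> Vs S"
    then show "U (T u) = u" unfolding T_def U_def by (rule extr_inv[OF hf hg gf sg'])
  next
    fix u :: "'b \<Rightarrow> 'k" assume "u \<in> Vs S'"
    then show "T (U u) = u" unfolding T_def U_def by (rule extr_inv[OF hg hf fg sg])
  next
    fix u u' :: "'a \<Rightarrow> 'k" assume "u \<in> Vs S" "u' \<in> Vs S"
    then show "Bf E u u' = 0 \<longleftrightarrow> Bf E' (T u) (T u') = 0" unfolding T_def by (rule extr_Bf[OF hf injf])
  qed
  obtain \<sigma> where s: "inj_on \<sigma> S" "\<sigma> ` S \<subseteq> S'"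
    "\<forall>x\<in>S. \<forall>y\<in>S. x \<noteq> y \<and> {x,y} \<notin> E \<longrightarrow> {\<sigma> x, \<sigma> y} \<notin> E'"
    using mainfinal[OF good sg sg'] by blast
  obtain \<rho> where r: "inj_on \<rho> S'" "\<rho> ` S' \<subseteq> S"
    "\<forall>x\<in>S'. \<forall>y\<in>S'. x \<noteq> y \<and> {x,y} \<notin> E' \<longrightarrow> {\<rho> x, \<rho> y} \<notin> E"
    using mainfinal[OF good_sym[OF good] sg' sg] by blast
  show ?thesis by (rule final_comb[OF sg sg' s r])
qed


end
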